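(* Let $G=(\mathcal{S},\mathbb{A})$ be a finite directed acyclic graph with a unique initial state $\mathbf{s}_0$ (no incoming edges), and let $\mathcal{X}\subseteq\mathcal{S}$ be the set of terminal states. A complete trajectory is a path $\tau=(\mathbf{s}_0\to\mathbf{s}_1\to\dots\to\mathbf{s}_n)$ in $G$ with $\mathbf{s}_n=\mathbf{x}\in\mathcal{X}$. Let $R:\mathcal{X}\to\mathbb{R}_{\ge 0}$ be the extrinsic reward, let $r:\mathcal{X}\to\mathbb{R}_{\ge 0}$ be a state-based intrinsic reward on terminal states, and let $r(\mathbf{s}\to\mathbf{s}')\ge 0$ be edge-based intrinsic rewards on the edges of $G$. Let $Z>0$, let $F:\mathcal{S}\to\mathbb{R}_{>0}$ be a state flow, let $P_F(\cdot\mid\mathbf{s})$ be a forward policy (a probability distribution over the children of each non-terminal state $\mathbf{s}$), and let $P_B(\cdot\mid\mathbf{s}')$ be a backward policy (a probability distribution over the parents of each state $\mathbf{s}'\neq\mathbf{s}_0$). Define for each complete trajectory $\tau$ $$\mathcal{L}_{\rm GAFlowNet}(\tau)=\Big(\log\Big(Z\prod_{t=0}^{n-1}P_F(\mathbf{s}_{t+1}\mid\mathbf{s}_t)\Big)-\log\Big(\big[R(\mathbf{x})+r(\mathbf{x})\big]\prod_{t=0}^{n-1}\Big[P_B(\mathbf{s}_t\mid\mathbf{s}_{t+1})+\frac{r(\mathbf{s}_t\to\mathbf{s}_{t+1})}{F(\mathbf{s}_{t+1})}\Big]\Big)\Big)^2,$$ and let $P(\mathbf{x})=\sum_{\tau:\,\mathbf{s}_n=\mathbf{x}}\prod_{t=0}^{n-1}P_F(\mathbf{s}_{t+1}\mid\mathbf{s}_t)$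 be the probability that sampling a trajectory from $\mathbf{s}_0$ with the forward policy terminates at $\mathbf{x}$. Suppose that $\mathcal{L}_{\rm GAFlowNet}(\tau)=0$ for all complete trajectories $\tau$, and that $R(\mathbf{x})+r(\mathbf{x})>0$ for all $\mathbf{x}\in\mathcal{X}$. Then, when the edge-based intrinsic rewards $r(\mathbf{s}\to\mathbf{s}')$ converge to $0$ (with $F$ not vanishing): (1) $P(\mathbf{x})=\dfrac{R(\mathbf{x})+r(\mathbf{x})}{\sum_{\mathbf{x}'\in\mathcal{X}}[R(\mathbf{x}')+r(\mathbf{x}')]}$ for every $\mathbf{x}\in\mathcal{X}$; (2) if moreover the state-based intrinsic rewards $r(\mathbf{x})$ converge to $0$, then $P$ is an unbiased sampling distribution, i.e. $P(\mathbf{x})=R(\mathbf{x})/\sum_{\mathbf{x}'\in\mathcal{X}}R(\mathbf{x}')$.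
   Context: This is the setting of Generative Flow Networks (GFlowNets) with intermediate (intrinsic) rewards. The edge-based intrinsic rewards $r(\mathbf{s}\to\mathbf{s}')$ are extra flows attached to transitions, and the state-based intrinsic reward $r(\mathbf{x})$ augments the terminal reward $R(\mathbf{x})$. $Z$ plays the role of the (augmented) total flow. "Unbiased" means that terminal states are sampled with probability proportional to the extrinsic reward $R$. *)

theory Defs
  imports Complex_Main
begin

definition terminal_states :: "'a set \<Rightarrow> ('a \<times> 'a) set \<Rightarrow> 'a set" where
  "terminal_states S E = {s \<in> S. \<forall>s'. (s, s') \<notin> E}"

definition children :: "('a \<times> 'a) set \<Rightarrow> 'a \<Rightarrow> 'a set" where
  "children E s = {s'. (s, s') \<in> E}"

definition parents :: "('a \<times> 'a) set \<Rightarrow> 'a \<Rightarrow> 'a set" where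
  "parents E s' = {s. (s, s') \<in> E}"

definition complete_traj :: "('a \<times> 'a) set \<Rightarrow> 'a \<Rightarrow> 'a set \<Rightarrow> 'a list \<Rightarrow> bool" where
  "complete_traj E s0 X \<tau> \<longleftrightarrow>
     \<tau> \<noteq> [] \<and> hd \<tau> = s0 \<and> (\<forall>t. Suc t < length \<tau> \<longrightarrow> (\<tau> ! t, \<tau> ! Suc t) \<in> E) \<and> last \<tau> \<in> X"

definition path_prod :: "('a \<Rightarrow> 'a \<Rightarrow> real) \<Rightarrow> 'a list \<Rightarrow> real" where
  "path_prod f \<tau> = (\<Prod>t < length \<tau> - 1. f (\<tau> ! t) (\<tau> ! Suc t))"

text \<open>Convention: PF s s' = P_F(s' | s), PB s' s = P_B(s | s'),
  re s s' = r(s -> s') (edge reward), rx x = r(x) (state reward).\<close>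

definition gaf_lhs :: "real \<Rightarrow> ('a \<Rightarrow> 'a \<Rightarrow> real) \<Rightarrow> 'a list \<Rightarrow> real" where
  "gaf_lhs Z PF \<tau> = Z * path_prod PF \<tau>"

definition gaf_rhs :: "('a \<Rightarrow> real) \<Rightarrow> ('a \<Rightarrow> real) \<Rightarrow> ('a \<Rightarrow> real) \<Rightarrow> ('a \<Rightarrow> 'a \<Rightarrow> real)
     \<Rightarrow> ('a \<Rightarrow> 'a \<Rightarrow> real) \<Rightarrow> 'a list \<Rightarrow> real" where
  "gaf_rhs R rx F PB re \<tau> =
     (R (last \<tau>) + rx (last \<tau>)) * path_prod (\<lambda>s s'. PB s' s + re s s' / F s') \<tau>"

text \<open>The GAFlowNet trajectory-balance loss (real-valued; only meaningful when
  both log arguments are positive).\<close>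

definition gaf_loss :: "real \<Rightarrow> ('a \<Rightarrow> 'a \<Rightarrow> real) \<Rightarrow> ('a \<Rightarrow> real) \<Rightarrow> ('a \<Rightarrow> real) \<Rightarrow> ('a \<Rightarrow> real)
     \<Rightarrow> ('a \<Rightarrow> 'a \<Rightarrow> real) \<Rightarrow> ('a \<Rightarrow> 'a \<Rightarrow> real) \<Rightarrow> 'a list \<Rightarrow> real" where
  "gaf_loss Z PF R rx F PB re \<tau> = (ln (gaf_lhs Z PF \<tau>) - ln (gaf_rhs R rx F PB re \<tau>))\<^sup>2"

text \<open>"The loss equals 0" (as an actual real number, i.e. both logarithms are finite).\<close>

definition gaf_loss_zero :: "real \<Rightarrow> ('a \<Rightarrow> 'a \<Rightarrow> real) \<Rightarrow> ('a \<Rightarrow> real) \<Rightarrow> ('a \<Rightarrow> real) \<Rightarrow> ('a \<Rightarrow> real)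
     \<Rightarrow> ('a \<Rightarrow> 'a \<Rightarrow> real) \<Rightarrow> ('a \<Rightarrow> 'a \<Rightarrow> real) \<Rightarrow> 'a list \<Rightarrow> bool" where
  "gaf_loss_zero Z PF R rx F PB re \<tau> \<longleftrightarrow>
     0 < gaf_lhs Z PF \<tau> \<and> 0 < gaf_rhs R rx F PB re \<tau> \<and> gaf_loss Z PF R rx F PB re \<tau> = 0"

definition term_prob :: "('a \<times> 'a) set \<Rightarrow> 'a \<Rightarrow> 'a set \<Rightarrow> ('a \<Rightarrow> 'a \<Rightarrow> real) \<Rightarrow> 'a \<Rightarrow> real" where
  "term_prob E s0 X PF x = (\<Sum>\<tau> \<in> {\<tau>. complete_traj E s0 X \<tau> \<and> last \<tau> = x}. path_prod PF \<tau>)"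

end

theory Submission
  imports Defs
begin


fun epath :: "('a \<times> 'a) set \<Rightarrow> 'a list \<Rightarrow> bool" where
  "epath E [] = False"
| "epath E [x] = True"
| "epath E (x # y # xs) = ((x, y) \<in> E \<and> epath E (y # xs))"

lemma epath_iff: "epath E \<tau> \<longleftrightarrow> \<tau> \<noteq> [] \<and> (\<forall>t. Suc t < length \<tau> \<longrightarrow> (\<tau> ! t, \<tau> ! Suc t) \<in> E)"
proof (induction E \<tau> rule: epath.induct)
  case (3 E x y xs)
  show ?case
  proof
    assume "epath E (x # y # xs)"
    then show "x # y # xs \<noteq> [] \<and> (\<forall>t. Suc t < length (x # y # xs) \<longrightarrow> ((x # y # xs) ! t, (x # y # xs) ! Suc t) \<in> E)"
      using 3 by (auto simp: less_Suc_eq_0_disj)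
  next
    assume h: "x # y # xs \<noteq> [] \<and> (\<forall>t. Suc t < length (x # y # xs) \<longrightarrow> ((x # y # xs) ! t, (x # y # xs) ! Suc t) \<in> E)"
    then have "(x, y) \<in> E" by (metis length_Cons nth_Cons_0 nth_Cons_Suc zero_less_Suc Suc_less_eq)
    moreover have "\<forall>t. Suc t < length (y # xs) \<longrightarrow> ((y # xs) ! t, (y # xs) ! Suc t) \<in> E"
    proof (intro allI impI)
      fix t assume "Suc t < length (y # xs)"
      then have "Suc (Suc t) < length (x # y # xs)" by simp
      with h have "((x # y # xs) ! Suc t, (x # y # xs) ! Suc (Suc t)) \<in> E" by blast
      then show "((y # xs) ! t, (y # xs) ! Suc t) \<in> E" by simp
    qed
    ultimately show "epath E (x # y # xs)" using 3 by simp
  qed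
qed auto

lemma epath_ne: "epath E \<tau> \<Longrightarrow> \<tau> \<noteq> []"
  by auto

lemma complete_traj_iff: "complete_traj E s0 X \<tau> \<longleftrightarrow> epath E \<tau> \<and> hd \<tau> = s0 \<and> last \<tau> \<in> X"
  unfolding complete_traj_def epath_iff by blast

lemma pp_single[simp]: "path_prod f [x] = 1"
  by (simp add: path_prod_def)

lemma pp_cons2[simp]: "path_prod f (x # y # xs) = f x y * path_prod f (y # xs)"
proof -
  have "path_prod f (x#y#xs) = (\<Prod>t<Suc (length xs). f ((x#y#xs)!t) ((x#y#xs)!Suc t))"
    by (simp add: path_prod_def del: prod.lessThan_Suc)
  also have "\<dots> = f x y * (\<Prod>t<length xs. f ((y#xs)!t) ((y#xs)! Suc t))"
    by (subst prod.lessThan_Suc_shift) simp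
  also have "\<dots> = f x y * path_prod f (y#xs)" by (simp add: path_prod_def del: prod.lessThan_Suc)
  finally show ?thesis .
qed

lemma pp_cons: "\<tau> \<noteq> [] \<Longrightarrow> path_prod f (x # \<tau>) = f x (hd \<tau>) * path_prod f \<tau>"
  by (cases \<tau>) auto

lemma epath_cons: "\<tau> \<noteq> [] \<Longrightarrow> epath E (x # \<tau>) \<longleftrightarrow> (x, hd \<tau>) \<in> E \<and> epath E \<tau>"
  by (cases \<tau>) auto

lemma epath_snoc: "xs \<noteq> [] \<Longrightarrow> epath E (xs @ [y]) \<longleftrightarrow> epath E xs \<and> (last xs, y) \<in> E"
proof (induction xs)
  case (Cons a xs)
  show ?case
  proof (cases "xs = []")
    case False
    then show ?thesis using Cons by (simp add: epath_cons)
  qed simp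
qed simp

lemma pp_snoc: "xs \<noteq> [] \<Longrightarrow> path_prod f (xs @ [y]) = path_prod f xs * f (last xs) y"
proof (induction xs)
  case (Cons a xs)
  show ?case
  proof (cases "xs = []")
    case False
    then show ?thesis using Cons by (simp add: pp_cons)
  qed simp
qed simp

lemma epath_rev: "epath (E\<inverse>) (rev \<tau>) \<longleftrightarrow> epath E \<tau>"
proof (induction \<tau>)
  case (Cons a \<tau>)
  show ?case
  proof (cases "\<tau> = []")
    case False
    then show ?thesis using Cons by (auto simp: epath_snoc epath_cons last_rev)
  qed simp
qed simp

lemma pp_rev: "path_prod f (rev \<tau>) = path_prod (\<lambda>a b. f b a) \<tau>"
proof (induction \<tau>)
  case (Cons a \<tau>)
  show ?case
  proof (cases "\<tau> = []")
    case False
    then show ?thesis using Cons by (simp add: pp_snoc pp_cons last_rev)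
  qed simp
qed (simp add: path_prod_def)

lemma epath_trancl: "epath E (x # xs) \<Longrightarrow> y \<in> set xs \<Longrightarrow> (x, y) \<in> E\<^sup>+"
proof (induction xs arbitrary: x)
  case (Cons a xs)
  then have "(x, a) \<in> E" "epath E (a # xs)" by auto
  then show ?case using Cons by (auto intro: trancl_into_trancl2)
qed simp

lemma epath_distinct: "acyclic E \<Longrightarrow> epath E xs \<Longrightarrow> distinct xs"
proof (induction xs)
  case (Cons a xs)
  show ?case
  proof (cases xs)
    case (Cons b ys)
    have "a \<notin> set xs" using epath_trancl[of E a xs a] Cons.prems by (auto simp: acyclic_def)
    then show ?thesis using Cons.IH Cons.prems \<open>xs = b # ys\<close> by auto
  qed simp
qed simp

lemma epath_set: "E \<subseteq> S \<times> S \<Longrightarrow> epath E xs \<Longrightarrow> hd xs \<in> S \<Longrightarrow> set xs \<subseteq> S"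
proof (induction xs)
  case (Cons a xs)
  show ?case
  proof (cases xs)
    case (Cons b ys)
    then show ?thesis using Cons.IH Cons.prems by auto
  qed (use Cons.prems in simp)
qed simp

lemma finite_paths:
  assumes "finite S" "E \<subseteq> S \<times> S" "acyclic E"
  shows "finite {\<tau>. epath E \<tau> \<and> hd \<tau> \<in> S}"
proof -
  have "{\<tau>. epath E \<tau> \<and> hd \<tau> \<in> S} \<subseteq> {xs. set xs \<subseteq> S \<and> length xs \<le> card S}"
  proof safe
    fix xs assume h: "epath E xs" "hd xs \<in> S"
    show s: "\<And>x. x \<in> set xs \<Longrightarrow> x \<in> S" using epath_set[OF assms(2) h] by auto
    have "distinct xs" using epath_distinct[OF assms(3) h(1)] .
    then show "length xs \<le> card S"
      by (metis distinct_card card_mono assms(1) s subsetI)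
  qed
  then show ?thesis using finite_subset finite_lists_length_le[OF assms(1)] by blast
qed

lemma flow_sum:
  assumes finS: "finite S" and Esub: "E \<subseteq> S \<times> S" and acyc: "acyclic E"
    and T_def: "T = {s \<in> S. \<forall>s'. (s, s') \<notin> E}"
    and W1: "\<forall>s \<in> S - T. (\<Sum>s' \<in> children E s. W s s') = 1"
  shows "s \<in> S \<Longrightarrow> (\<Sum>\<tau> \<in> {\<tau>. epath E \<tau> \<and> hd \<tau> = s \<and> last \<tau> \<in> T}. path_prod W \<tau>) = 1"
proof (induction s rule: wf_induct_rule[OF finite_acyclic_wf_converse[OF finite_subset[OF Esub finite_cartesian_product[OF finS finS]] acyc]])
  fix s
  assume IH: "\<And>y. (y, s) \<in> E\<inverse> \<Longrightarrow> y \<in> S \<Longrightarrow> (\<Sum>\<tau> \<in> {\<tau>. epath E \<tau> \<and> hd \<tau> = y \<and> last \<tau> \<in> T}. path_prod W \<tau>) = 1"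
    and sS: "s \<in> S"
  note finS' = finite_cartesian_product[OF finS finS]
  define Ps where "Ps s = {\<tau>. epath E \<tau> \<and> hd \<tau> = s \<and> last \<tau> \<in> T}" for s
  have finP: "finite (Ps s')" if "s' \<in> S" for s'
    by (rule finite_subset[OF _ finite_paths[OF finS Esub acyc]]) (use that in \<open>auto simp: Ps_def\<close>)
  show "(\<Sum>\<tau> \<in> {\<tau>. epath E \<tau> \<and> hd \<tau> = s \<and> last \<tau> \<in> T}. path_prod W \<tau>) = 1"
  proof (cases "s \<in> T")
    case True
    have "Ps s = {[s]}"
    proof safe
      fix \<tau> assume "\<tau> \<in> Ps s"
      then show "\<tau> = [s]" using True unfolding Ps_def T_def
        by (cases "(E,\<tau>)" rule: epath.cases) auto
    qed (use True in \<open>auto simp: Ps_def\<close>)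
    then show ?thesis by (simp add: Ps_def)
  next
    case False
    have chS: "children E s \<subseteq> S" using Esub by (auto simp: children_def)
    have finC: "finite (children E s)" using finite_subset[OF chS finS] .
    have img: "Ps s = (\<lambda>(s', \<tau>'). s # \<tau>') ` (SIGMA s':children E s. Ps s')"
    proof safe
      fix \<tau> assume t: "\<tau> \<in> Ps s"
      then obtain y ys where ty: "\<tau> = s # y # ys" using False sS unfolding Ps_def
        by (cases "(E,\<tau>)" rule: epath.cases) auto
      then show "\<tau> \<in> (\<lambda>(s', \<tau>'). s # \<tau>') ` (SIGMA s':children E s. Ps s')"
        using t by (auto simp: Ps_def children_def image_iff intro!: bexI[of _ "(y, y # ys)"])
    next
      fix s' \<tau>' assume "s' \<in> children E s" "\<tau>' \<in> Ps s'"
      then show "s # \<tau>' \<in> Ps s"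
        by (cases "(E,\<tau>')" rule: epath.cases) (auto simp: Ps_def children_def)
    qed
    have inj: "inj_on (\<lambda>(s', \<tau>'). s # \<tau>') (SIGMA s':children E s. Ps s')"
      by (auto simp: inj_on_def Ps_def)
    have "(\<Sum>\<tau>\<in>Ps s. path_prod W \<tau>) = (\<Sum>(s', \<tau>')\<in>(SIGMA s':children E s. Ps s'). path_prod W (s # \<tau>'))"
      unfolding img by (subst sum.reindex[OF inj]) (simp add: case_prod_beta)
    also have "\<dots> = (\<Sum>(s', \<tau>')\<in>(SIGMA s':children E s. Ps s'). W s s' * path_prod W \<tau>')"
    proof (rule sum.cong[OF refl])
      fix p assume "p \<in> (SIGMA s':children E s. Ps s')"
      then show "(case p of (s', \<tau>') \<Rightarrow> path_prod W (s # \<tau>')) = (case p of (s', \<tau>') \<Rightarrow> W s s' * path_prod W \<tau>')"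
        by (cases p) (auto simp: Ps_def pp_cons epath_ne)
    qed
    also have "\<dots> = (\<Sum>s'\<in>children E s. \<Sum>\<tau>'\<in>Ps s'. W s s' * path_prod W \<tau>')"
      by (rule sum.Sigma[symmetric]) (use finC finP chS in auto)
    also have "\<dots> = (\<Sum>s'\<in>children E s. W s s')"
    proof (rule sum.cong[OF refl])
      fix s' assume s': "s' \<in> children E s"
      then have "(s', s) \<in> E\<inverse>" "s' \<in> S" using chS by (auto simp: children_def)
      then have "(\<Sum>\<tau>'\<in>Ps s'. path_prod W \<tau>') = 1" using IH by (simp add: Ps_def)
      then show "(\<Sum>\<tau>'\<in>Ps s'. W s s' * path_prod W \<tau>') = W s s'"
        by (simp add: sum_distrib_left[symmetric])
    qed
    also have "\<dots> = 1" using W1 False sS by auto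
    finally show ?thesis by (simp add: Ps_def)
  qed
qed



lemma bdd_null:
  fixes X Y :: "nat \<Rightarrow> real"
  assumes "\<forall>k. \<bar>X k\<bar> \<le> 1" "Y \<longlonglongrightarrow> 0"
  shows "(\<lambda>k. X k * Y k) \<longlonglongrightarrow> 0"
proof (rule tendsto_0_le[OF assms(2), where K=1])
  show "\<forall>\<^sub>F k in sequentially. norm (X k * Y k) \<le> norm (Y k) * 1"
    using assms(1) by (auto simp: abs_mult intro!: always_eventually mult_left_le_one_le)
qed

lemma pp_conv:
  fixes g h :: "nat \<Rightarrow> 'a \<Rightarrow> 'a \<Rightarrow> real"
  assumes "epath E \<tau>"
    and gh: "\<forall>a b. (a,b)\<in>E \<longrightarrow> (\<lambda>k. g k a b - h k a b) \<longlonglongrightarrow> 0"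
    and hb: "\<forall>k a b. (a,b)\<in>E \<longrightarrow> \<bar>h k a b\<bar> \<le> 1"
  shows "(\<lambda>k. path_prod (g k) \<tau> - path_prod (h k) \<tau>) \<longlonglongrightarrow> 0 \<and> (\<forall>k. \<bar>path_prod (h k) \<tau>\<bar> \<le> 1)"
  using assms(1)
proof (induction \<tau>)
  case (Cons x \<tau>)
  show ?case
  proof (cases \<tau>)
    case Nil
    then show ?thesis by simp
  next
    case (Cons y xs)
    with Cons.prems have xy: "(x, y) \<in> E" and ep: "epath E \<tau>" by auto
    note IH = Cons.IH[OF ep]
    define D where "D k = path_prod (g k) \<tau> - path_prod (h k) \<tau>" for k
    define e where "e k = g k x y - h k x y" for k
    have D0: "D \<longlonglongrightarrow> 0" using IH unfolding D_def by simp
    have e0: "e \<longlonglongrightarrow> 0" unfolding e_def using gh xy by simp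
    have hb': "\<forall>k. \<bar>h k x y\<bar> \<le> 1" using hb xy by auto
    have eq: "path_prod (g k) (x # \<tau>) - path_prod (h k) (x # \<tau>)
        = e k * path_prod (h k) \<tau> + e k * D k + h k x y * D k" for k
      unfolding D_def e_def using Cons by (simp add: algebra_simps)
    have t1: "(\<lambda>k. e k * path_prod (h k) \<tau>) \<longlonglongrightarrow> 0"
      using bdd_null[of "\<lambda>k. path_prod (h k) \<tau>" e] IH e0 by (simp add: mult.commute)
    have t2: "(\<lambda>k. e k * D k) \<longlonglongrightarrow> 0 * 0" by (rule tendsto_mult[OF e0 D0])
    have t3: "(\<lambda>k. h k x y * D k) \<longlonglongrightarrow> 0" using bdd_null[OF hb' D0] .
    have "(\<lambda>k. e k * path_prod (h k) \<tau> + e k * D k + h k x y * D k) \<longlonglongrightarrow> 0 + 0 * 0 + 0"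
      by (intro tendsto_add t1 t2 t3)
    then have c: "(\<lambda>k. path_prod (g k) (x # \<tau>) - path_prod (h k) (x # \<tau>)) \<longlonglongrightarrow> 0"
      by (simp add: eq)
    have "\<bar>path_prod (h k) (x # \<tau>)\<bar> \<le> 1" for k
      using Cons IH hb' by (simp add: abs_mult mult_le_one)
    with c show ?thesis by blast
  qed
qed simp

lemma analysis:
  fixes w Q P :: "nat \<Rightarrow> 'a \<Rightarrow> real" and Z :: "nat \<Rightarrow> real"
  assumes finX: "finite X" and xX: "x \<in> X"
    and wpos: "\<forall>k. \<forall>y\<in>X. 0 < w k y"
    and Q1: "\<forall>y\<in>X. (\<lambda>k. Q k y) \<longlonglongrightarrow> 1"
    and eq: "\<forall>k. \<forall>y\<in>X. Z k * P k y = w k y * Q k y"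
    and sP: "\<forall>k. (\<Sum>y\<in>X. P k y) = 1"
    and Zpos: "\<forall>k. 0 < Z k"
  shows "(\<lambda>k. P k x - w k x / (\<Sum>y\<in>X. w k y)) \<longlonglongrightarrow> 0"
proof -
  define A where "A k = (\<Sum>y\<in>X. w k y)" for k
  define a where "a k y = w k y / A k" for k y
  define D where "D k = (\<Sum>y\<in>X. a k y * Q k y)" for k
  have Apos: "0 < A k" for k
    unfolding A_def using wpos xX finX by (intro sum_pos) auto
  have a_nn: "0 \<le> a k y" if "y \<in> X" for k y
    using wpos that Apos[of k] by (simp add: a_def less_imp_le)
  have a_le: "a k y \<le> 1" if "y \<in> X" for k y
  proof -
    have "w k y \<le> A k" unfolding A_def
      using wpos that finX by (intro member_le_sum) (auto simp: less_imp_le)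
    then show ?thesis using Apos[of k] by (simp add: a_def)
  qed
  have a_abs: "\<bar>a k y\<bar> \<le> 1" if "y \<in> X" for k y using a_nn a_le that by auto
  have a_sum: "(\<Sum>y\<in>X. a k y) = 1" for k
    using Apos[of k] by (simp add: a_def A_def sum_divide_distrib[symmetric])
  have Zeq: "Z k = A k * D k" for k
  proof -
    have "Z k = Z k * (\<Sum>y\<in>X. P k y)" using sP by simp
    also have "\<dots> = (\<Sum>y\<in>X. w k y * Q k y)" using eq by (simp add: sum_distrib_left)
    also have "\<dots> = A k * D k" using Apos[of k]
      by (simp add: D_def a_def sum_distrib_left)
    finally show ?thesis .
  qed
  have Dpos: "0 < D k" for k using Zeq[of k] Zpos Apos[of k] by (metis zero_less_mult_pos)
  have D1: "D \<longlonglongrightarrow> 1"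
  proof -
    have "D k - 1 = (\<Sum>y\<in>X. a k y * (Q k y - 1))" for k
      using a_sum[of k] by (simp add: D_def algebra_simps sum_subtractf)
    moreover have "(\<lambda>k. \<Sum>y\<in>X. a k y * (Q k y - 1)) \<longlonglongrightarrow> 0"
    proof (rule tendsto_null_sum)
      fix y assume y: "y \<in> X"
      have "(\<lambda>k. Q k y - 1) \<longlonglongrightarrow> 0" using Q1 y tendsto_diff[of "\<lambda>k. Q k y" 1 _ "\<lambda>k. 1" 1] by auto
      then show "(\<lambda>k. a k y * (Q k y - 1)) \<longlonglongrightarrow> 0" using bdd_null[of "\<lambda>k. a k y"] a_abs y by blast
    qed
    ultimately have "(\<lambda>k. D k - 1) \<longlonglongrightarrow> 0" by simp
    then show ?thesis using LIM_zero_cancel by blast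
  qed
  have Pform: "P k x - w k x / (\<Sum>y\<in>X. w k y) = a k x * (Q k x - D k) / D k" for k
  proof -
    have "P k x = w k x * Q k x / Z k" using eq xX Zpos[rule_format, of k]
      by (simp add: field_simps)
    also have "\<dots> = a k x * Q k x / D k" using Zeq[of k] Apos[of k] Dpos[of k]
      by (simp add: a_def field_simps)
    finally show ?thesis using Dpos[of k] by (simp add: A_def[symmetric] a_def[symmetric] field_simps)
  qed
  have "(\<lambda>k. Q k x - D k) \<longlonglongrightarrow> 1 - 1" using Q1 xX D1 by (intro tendsto_diff) auto
  then have "(\<lambda>k. a k x * (Q k x - D k)) \<longlonglongrightarrow> 0" using bdd_null[of "\<lambda>k. a k x"] a_abs xX by simp
  then have "(\<lambda>k. a k x * (Q k x - D k) / D k) \<longlonglongrightarrow> 0 / 1" using D1 by (intro tendsto_divide) auto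
  then show ?thesis by (simp add: Pform)
qed

theorem theorem1:
  fixes S :: "'a set" and E :: "('a \<times> 'a) set" and s0 :: 'a and X :: "'a set"
    and R :: "'a \<Rightarrow> real"
    and rx :: "nat \<Rightarrow> 'a \<Rightarrow> real"
    and re :: "nat \<Rightarrow> 'a \<Rightarrow> 'a \<Rightarrow> real"
    and Z :: "nat \<Rightarrow> real"
    and F :: "nat \<Rightarrow> 'a \<Rightarrow> real"
    and PF :: "nat \<Rightarrow> 'a \<Rightarrow> 'a \<Rightarrow> real"
    and PB :: "nat \<Rightarrow> 'a \<Rightarrow> 'a \<Rightarrow> real"
  assumes finS: "finite S"
    and E_sub: "E \<subseteq> S \<times> S"
    and acyc: "acyclic E"
    and s0_in: "s0 \<in> S"
    and s0_init: "\<forall>s. (s, s0) \<notin> E"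
    and s0_unique: "\<forall>s \<in> S. s \<noteq> s0 \<longrightarrow> (\<exists>p. (p, s) \<in> E)"
    and X_def: "X = terminal_states S E"
    and R_nonneg: "\<forall>x \<in> X. 0 \<le> R x"
    and rx_nonneg: "\<forall>k. \<forall>x \<in> X. 0 \<le> rx k x"
    and re_nonneg: "\<forall>k. \<forall>(s, s') \<in> E. 0 \<le> re k s s'"
    and Z_pos: "\<forall>k. 0 < Z k"
    and F_pos: "\<forall>k. \<forall>s \<in> S. 0 < F k s"
    and PF_dist: "\<forall>k. \<forall>s \<in> S - X. (\<forall>s' \<in> children E s. 0 \<le> PF k s s')
                    \<and> (\<Sum>s' \<in> children E s. PF k s s') = 1"
    and PB_dist: "\<forall>k. \<forall>s' \<in> S - {s0}. (\<forall>s \<in> parents E s'. 0 \<le> PB k s' s)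
                    \<and> (\<Sum>s \<in> parents E s'. PB k s' s) = 1"
    and loss_zero: "\<forall>k. \<forall>\<tau>. complete_traj E s0 X \<tau> \<longrightarrow>
                    gaf_loss_zero (Z k) (PF k) R (rx k) (F k) (PB k) (re k) \<tau>"
    and Rr_pos: "\<forall>k. \<forall>x \<in> X. 0 < R x + rx k x"
    and re_to_0: "\<forall>(s, s') \<in> E. (\<lambda>k. re k s s') \<longlonglongrightarrow> 0"
    and F_nonvanishing: "\<exists>c > 0. \<forall>k. \<forall>s \<in> S. c \<le> F k s"
  shows "(\<forall>x \<in> X. (\<lambda>k. term_prob E s0 X (PF k) x
              - (R x + rx k x) / (\<Sum>y \<in> X. R y + rx k y)) \<longlonglongrightarrow> 0)
       \<and> ((\<forall>x \<in> X. (\<lambda>k. rx k x) \<longlonglongrightarrow> 0) \<and> 0 < (\<Sum>y \<in> X. R y) \<longrightarrow>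
          (\<forall>x \<in> X. (\<lambda>k. term_prob E s0 X (PF k) x) \<longlonglongrightarrow> R x / (\<Sum>y \<in> X. R y)))"
proof -
  have XS: "X \<subseteq> S" using X_def by (auto simp: terminal_states_def)
  have finX: "finite X" using finite_subset[OF XS finS] .
  define Pset where "Pset x = {\<tau>. epath E \<tau> \<and> hd \<tau> = s0 \<and> last \<tau> = x}" for x
  define CT where "CT = {\<tau>. epath E \<tau> \<and> hd \<tau> = s0 \<and> last \<tau> \<in> X}"
  define g where "g k a b = PB k b a + re k a b / F k b" for k a b
  have gk: "g k = (\<lambda>s s'. PB k s' s + re k s s' / F k s')" for k
    by (intro ext) (simp add: g_def)
  define Q where "Q k x = (\<Sum>\<tau>\<in>Pset x. path_prod (g k) \<tau>)" for k x
  have finAll: "finite {\<tau>. epath E \<tau> \<and> hd \<tau> \<in> S}" using finite_paths[OF finS E_sub acyc] .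
  have finP: "finite (Pset x)" for x
    by (rule finite_subset[OF _ finAll]) (use s0_in in \<open>auto simp: Pset_def\<close>)
  have finCT: "finite CT"
    by (rule finite_subset[OF _ finAll]) (use s0_in in \<open>auto simp: CT_def\<close>)
  have tp: "term_prob E s0 X (PF k) x = (\<Sum>\<tau>\<in>Pset x. path_prod (PF k) \<tau>)" if "x \<in> X" for k x
    unfolding term_prob_def Pset_def complete_traj_iff using that by (intro sum.cong) auto
  have sumP: "(\<Sum>x\<in>X. term_prob E s0 X (PF k) x) = 1" for k
  proof -
    have "(\<Sum>x\<in>X. term_prob E s0 X (PF k) x) = (\<Sum>x\<in>X. \<Sum>\<tau>\<in>{\<tau>\<in>CT. last \<tau> = x}. path_prod (PF k) \<tau>)"
      unfolding term_prob_def complete_traj_iff CT_def by (intro sum.cong) auto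
    also have "\<dots> = (\<Sum>\<tau>\<in>CT. path_prod (PF k) \<tau>)"
      by (rule sum.group[OF finCT finX]) (auto simp: CT_def)
    also have "\<dots> = 1" unfolding CT_def
    proof (rule flow_sum[OF finS E_sub acyc _ _ s0_in])
      show "X = {s \<in> S. \<forall>s'. (s, s') \<notin> E}" using X_def by (simp add: terminal_states_def)
      show "\<forall>s\<in>S - X. sum (PF k s) (children E s) = 1" using PF_dist by blast
    qed
    finally show ?thesis .
  qed
  have hB: "(\<Sum>\<tau>\<in>Pset x. path_prod (\<lambda>a b. PB k b a) \<tau>) = 1" if xS: "x \<in> S" for k x
  proof -
    have T0: "{s \<in> S. \<forall>s'. (s, s') \<notin> E\<inverse>} = {s0}" using s0_init s0_unique s0_in by auto
    have ch: "children (E\<inverse>) s = parents E s" for s by (auto simp: children_def parents_def)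
    have fl: "(\<Sum>\<sigma>\<in>{\<sigma>. epath (E\<inverse>) \<sigma> \<and> hd \<sigma> = x \<and> last \<sigma> \<in> {s0}}. path_prod (PB k) \<sigma>) = 1"
    proof (rule flow_sum[OF finS _ _ T0[symmetric] _ xS])
      show "E\<inverse> \<subseteq> S \<times> S" using E_sub by auto
      show "acyclic (E\<inverse>)" using acyc by (simp add: acyclic_converse)
      show "\<forall>s\<in>S - {s0}. sum (PB k s) (children (E\<inverse>) s) = 1" using PB_dist by (simp add: ch)
    qed
    have img: "{\<sigma>. epath (E\<inverse>) \<sigma> \<and> hd \<sigma> = x \<and> last \<sigma> \<in> {s0}} = rev ` Pset x"
    proof (intro equalityI subsetI)
      fix \<sigma> assume "\<sigma> \<in> {\<sigma>. epath (E\<inverse>) \<sigma> \<and> hd \<sigma> = x \<and> last \<sigma> \<in> {s0}}"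
      then have h: "epath (E\<inverse>) \<sigma>" "hd \<sigma> = x" "last \<sigma> = s0" by auto
      have "epath E (rev \<sigma>)" using epath_rev[of E "rev \<sigma>"] h(1) by simp
      then have "rev \<sigma> \<in> Pset x" using h by (auto simp: Pset_def hd_rev last_rev)
      then show "\<sigma> \<in> rev ` Pset x" by (metis rev_rev_ident image_eqI)
    next
      fix \<sigma> assume "\<sigma> \<in> rev ` Pset x"
      then obtain \<tau> where "\<tau> \<in> Pset x" "\<sigma> = rev \<tau>" by auto
      then show "\<sigma> \<in> {\<sigma>. epath (E\<inverse>) \<sigma> \<and> hd \<sigma> = x \<and> last \<sigma> \<in> {s0}}"
        by (auto simp: Pset_def epath_rev hd_rev last_rev)
    qed
    have "(\<Sum>\<tau>\<in>Pset x. path_prod (\<lambda>a b. PB k b a) \<tau>) = (\<Sum>\<tau>\<in>Pset x. path_prod (PB k) (rev \<tau>))"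
      by (simp add: pp_rev)
    also have "\<dots> = (\<Sum>\<sigma>\<in>rev ` Pset x. path_prod (PB k) \<sigma>)"
      by (subst sum.reindex) (auto intro: inj_onI)
    also have "\<dots> = 1" using fl img by simp
    finally show ?thesis .
  qed
  have heq: "Z k * term_prob E s0 X (PF k) x = (R x + rx k x) * Q k x" if xX: "x \<in> X" for k x
  proof -
    have "Z k * path_prod (PF k) \<tau> = (R x + rx k x) * path_prod (g k) \<tau>" if t: "\<tau> \<in> Pset x" for \<tau>
    proof -
      have "complete_traj E s0 X \<tau>" using t xX by (auto simp: Pset_def complete_traj_iff)
      then have lz: "gaf_loss_zero (Z k) (PF k) R (rx k) (F k) (PB k) (re k) \<tau>" using loss_zero by blast
      then have "ln (gaf_lhs (Z k) (PF k) \<tau>) = ln (gaf_rhs R (rx k) (F k) (PB k) (re k) \<tau>)"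
        by (simp add: gaf_loss_zero_def gaf_loss_def)
      then have "gaf_lhs (Z k) (PF k) \<tau> = gaf_rhs R (rx k) (F k) (PB k) (re k) \<tau>"
        using lz by (simp add: gaf_loss_zero_def)
      then show ?thesis using t by (simp add: gaf_lhs_def gaf_rhs_def gk Pset_def)
    qed
    then have "(\<Sum>\<tau>\<in>Pset x. Z k * path_prod (PF k) \<tau>) = (\<Sum>\<tau>\<in>Pset x. (R x + rx k x) * path_prod (g k) \<tau>)"
      by (rule sum.cong[OF refl])
    then show ?thesis using xX by (simp only: tp Q_def sum_distrib_left)
  qed
  obtain c where c: "c > 0" "\<forall>k. \<forall>s \<in> S. c \<le> F k s" using F_nonvanishing by blast
  have hQ: "(\<lambda>k. Q k x) \<longlonglongrightarrow> 1" if xX: "x \<in> X" for x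
  proof -
    have xS: "x \<in> S" using XS xX by auto
    have gh: "\<forall>a b. (a,b)\<in>E \<longrightarrow> (\<lambda>k. g k a b - PB k b a) \<longlonglongrightarrow> 0"
    proof (intro allI impI)
      fix a b assume ab: "(a, b) \<in> E"
      then have bS: "b \<in> S" using E_sub by auto
      have r0: "(\<lambda>k. re k a b) \<longlonglongrightarrow> 0" using re_to_0 ab by auto
      have "(\<lambda>k. re k a b / F k b) \<longlonglongrightarrow> 0"
      proof (rule tendsto_0_le[OF r0, where K="1/c"])
        show "\<forall>\<^sub>F k in sequentially. norm (re k a b / F k b) \<le> norm (re k a b) * (1 / c)"
        proof (intro always_eventually allI)
          fix k
          have Fp: "0 < F k b" using F_pos bS by auto
          have "c \<le> F k b" using c bS by auto
          then have "\<bar>re k a b\<bar> / F k b \<le> \<bar>re k a b\<bar> / c"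
            using c(1) by (intro divide_left_mono) auto
          then show "norm (re k a b / F k b) \<le> norm (re k a b) * (1 / c)" using Fp by simp
        qed
      qed
      then show "(\<lambda>k. g k a b - PB k b a) \<longlonglongrightarrow> 0" by (simp add: g_def)
    qed
    have hb: "\<forall>k a b. (a,b)\<in>E \<longrightarrow> \<bar>PB k b a\<bar> \<le> 1"
    proof (intro allI impI)
      fix k a b assume ab: "(a, b) \<in> E"
      then have bS: "b \<in> S - {s0}" using E_sub s0_init by auto
      have ap: "a \<in> parents E b" using ab by (simp add: parents_def)
      have finpar: "finite (parents E b)"
        by (rule finite_subset[OF _ finS]) (use E_sub in \<open>auto simp: parents_def\<close>)
      have nn: "\<forall>s \<in> parents E b. 0 \<le> PB k b s" and s1: "(\<Sum>s \<in> parents E b. PB k b s) = 1"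
        using PB_dist bS by auto
      have "PB k b a \<le> (\<Sum>s \<in> parents E b. PB k b s)"
        by (rule member_le_sum[OF ap]) (use nn finpar in auto)
      then show "\<bar>PB k b a\<bar> \<le> 1" using s1 nn ap by auto
    qed
    have eqQ: "Q k x - 1 = (\<Sum>\<tau>\<in>Pset x. path_prod (g k) \<tau> - path_prod (\<lambda>a b. PB k b a) \<tau>)" for k
      unfolding sum_subtractf hB[OF xS, of k] Q_def ..
    have "(\<lambda>k. \<Sum>\<tau>\<in>Pset x. path_prod (g k) \<tau> - path_prod (\<lambda>a b. PB k b a) \<tau>) \<longlonglongrightarrow> 0"
    proof (rule tendsto_null_sum)
      fix \<tau> assume "\<tau> \<in> Pset x"
      then have ep: "epath E \<tau>" by (simp add: Pset_def)
      have "(\<lambda>k. path_prod (g k) \<tau> - path_prod (\<lambda>a b. PB k b a) \<tau>) \<longlonglongrightarrow> 0 \<and>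
          (\<forall>k. \<bar>path_prod (\<lambda>a b. PB k b a) \<tau>\<bar> \<le> 1)"
        by (rule pp_conv[OF ep gh hb])
      then show "(\<lambda>k. path_prod (g k) \<tau> - path_prod (\<lambda>a b. PB k b a) \<tau>) \<longlonglongrightarrow> 0" by (rule conjunct1)
    qed
    then have "(\<lambda>k. Q k x - 1) \<longlonglongrightarrow> 0" unfolding eqQ .
    then show ?thesis by (rule LIM_zero_cancel)
  qed
  have part1: "\<forall>x \<in> X. (\<lambda>k. term_prob E s0 X (PF k) x
              - (R x + rx k x) / (\<Sum>y \<in> X. R y + rx k y)) \<longlonglongrightarrow> 0"
  proof
    fix x assume xX: "x \<in> X"
    show "(\<lambda>k. term_prob E s0 X (PF k) x - (R x + rx k x) / (\<Sum>y \<in> X. R y + rx k y)) \<longlonglongrightarrow> 0"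
      by (rule analysis[where Q=Q and Z=Z, OF finX xX]) (use Rr_pos hQ heq sumP Z_pos in auto)
  qed
  show ?thesis
  proof (intro conjI impI part1)
    assume h: "(\<forall>x \<in> X. (\<lambda>k. rx k x) \<longlonglongrightarrow> 0) \<and> 0 < (\<Sum>y \<in> X. R y)"
    show "\<forall>x \<in> X. (\<lambda>k. term_prob E s0 X (PF k) x) \<longlonglongrightarrow> R x / (\<Sum>y \<in> X. R y)"
    proof
      fix x assume xX: "x \<in> X"
      have num: "(\<lambda>k. R x + rx k x) \<longlonglongrightarrow> R x + 0" using h xX by (intro tendsto_add) auto
      have den: "(\<lambda>k. \<Sum>y \<in> X. R y + rx k y) \<longlonglongrightarrow> (\<Sum>y \<in> X. R y + 0)"
        using h by (intro tendsto_sum tendsto_add) auto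
      have "(\<lambda>k. (R x + rx k x) / (\<Sum>y \<in> X. R y + rx k y)) \<longlonglongrightarrow> (R x + 0) / (\<Sum>y \<in> X. R y + 0)"
        using h by (intro tendsto_divide num den) auto
      then have a: "(\<lambda>k. (R x + rx k x) / (\<Sum>y \<in> X. R y + rx k y)) \<longlonglongrightarrow> R x / (\<Sum>y \<in> X. R y)" by simp
      have "(\<lambda>k. (term_prob E s0 X (PF k) x - (R x + rx k x) / (\<Sum>y \<in> X. R y + rx k y))
             + (R x + rx k x) / (\<Sum>y \<in> X. R y + rx k y)) \<longlonglongrightarrow> 0 + R x / (\<Sum>y \<in> X. R y)"
        using part1 xX a by (intro tendsto_add) auto
      then show "(\<lambda>k. term_prob E s0 X (PF k) x) \<longlonglongrightarrow> R x / (\<Sum>y \<in> X. R y)" by simp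
    qed
  qed
qed

end
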